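(* Let $m$ be even, $\Omega\subseteq\mathbb R^m$ open, and let $F\in\mathcal C^3(\Omega)$ take values in the $(m/2)$-vectors of $\mathbb R_{0,m}$. Then $F$ is inframonogenic in $\Omega$ if and only if both $F$ and $F(\underline x)\underline x$ are left $3$-monogenic in $\Omega$ (i.e. $\partial_{\underline x}^3F=0$ and $\partial_{\underline x}^3(F\underline x)=0$), and this holds if and only if both $F$ and $\underline xF(\underline x)$ are right $3$-monogenic in $\Omega$ (i.e. $F\partial_{\underline x}^3=0$ and $(\underline xF)\partial_{\underline x}^3=0$).
   Context: $\mathbb R_{0,m}$ is the $2^m$-dimensional real Clifford algebra generated by the orthonormal basis $e_1,\dots,e_m$ of $\mathbb R^m$ with relations $e_je_k+e_ke_j=-2\delta_{jk}$; it has basis $e_A=e_{j_1}\cdots e_{j_k}$, $A=\{j_1<\dots<j_k\}$, and the $k$-vectors are $\sum_{|A|=k}a_Ae_A$, $a_A\in\mathbb R$. A point of $\mathbb R^m$ is identified with $\underline x=\sum_j x_je_j$. The Dirac operator $\partial_{\underline x}=\sum_j e_j\partial_{x_j}$ acts from the left, $\partial_{\underline x}f=\sum_j e_j\partial_{x_j}f$, or from the right, $f\partial_{\underline x}=\sum_j(\partial_{x_j}f)e_j$; powers denote iterated application on the same side. $f\in\mathcal C^2$ is inframonogenic if $\partial_{\underline x}f\partial_{\underline x}=\sum_{i,j}e_i(\partial_{x_i}\partial_{x_j}f)e_j=0$. *)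

theory Defs
  imports "HOL-Analysis.Analysis"
begin


text \<open>Real Clifford algebra R_{0,m}, m = CARD('n), with the generators indexed by a
finite linearly ordered type 'n.  An element is its coefficient vector (a_A) indexed
by subsets A of the generator set; e_A = e_{j1}...e_{jk} with j1 < ... < jk.\<close>

type_synonym 'n clif = "real ^ ('n set)"

definition cbasis :: "'n::{finite,linorder} set \<Rightarrow> 'n::{finite,linorder} clif" where
  "cbasis A = (\<chi> B. if B = A then 1 else 0)"

text \<open>Sign in e_A e_B = csign A B e_{A symdiff B}, using e_j e_k = - e_k e_j (j \<noteq> k)
and e_j e_j = -1.\<close>
definition csign :: "'n::{finite,linorder} set \<Rightarrow> 'n::{finite,linorder} set \<Rightarrow> real" where
  "csign A B = (-1) ^ (card {(a, b). a \<in> A \<and> b \<in> B \<and> b < a} + card (A \<inter> B))"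

definition cmul :: "'n::{finite,linorder} clif \<Rightarrow> 'n::{finite,linorder} clif \<Rightarrow> 'n::{finite,linorder} clif" (infixl "\<odot>" 70) where
  "u \<odot> v = (\<chi> C. \<Sum>A\<in>UNIV. csign A (A - C \<union> (C - A)) * (u $ A) * (v $ (A - C \<union> (C - A))))"

definition cvec :: "real ^ 'n::{finite,linorder} \<Rightarrow> 'n::{finite,linorder} clif" where
  "cvec x = (\<Sum>j\<in>UNIV. (x $ j) *\<^sub>R cbasis {j})"

definition kvector :: "nat \<Rightarrow> 'n::{finite,linorder} clif \<Rightarrow> bool" where
  "kvector k u \<longleftrightarrow> (\<forall>A. card A \<noteq> k \<longrightarrow> u $ A = 0)"

definition pd :: "'n::{finite,linorder} \<Rightarrow> (real ^ 'n::{finite,linorder} \<Rightarrow> 'b::real_normed_vector) \<Rightarrow> real ^ 'n::{finite,linorder} \<Rightarrow> 'b" where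
  "pd j f x = vector_derivative (\<lambda>t. f (x + t *\<^sub>R axis j 1)) (at 0)"

fun Ck_on :: "nat \<Rightarrow> (real ^ 'n::{finite,linorder}) set \<Rightarrow> (real ^ 'n::{finite,linorder} \<Rightarrow> 'b::real_normed_vector) \<Rightarrow> bool" where
  "Ck_on 0 \<Omega> f = continuous_on \<Omega> f"
| "Ck_on (Suc k) \<Omega> f = (continuous_on \<Omega> f \<and>
     (\<forall>j. (\<forall>x\<in>\<Omega>. (\<lambda>t. f (x + t *\<^sub>R axis j 1)) differentiable (at 0)) \<and> Ck_on k \<Omega> (pd j f)))"

definition dirac_l :: "(real ^ 'n::{finite,linorder} \<Rightarrow> 'n::{finite,linorder} clif) \<Rightarrow> real ^ 'n::{finite,linorder} \<Rightarrow> 'n::{finite,linorder} clif" where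
  "dirac_l f x = (\<Sum>j\<in>UNIV. cbasis {j} \<odot> pd j f x)"

definition dirac_r :: "(real ^ 'n::{finite,linorder} \<Rightarrow> 'n::{finite,linorder} clif) \<Rightarrow> real ^ 'n::{finite,linorder} \<Rightarrow> 'n::{finite,linorder} clif" where
  "dirac_r f x = (\<Sum>j\<in>UNIV. pd j f x \<odot> cbasis {j})"

definition inframonogenic :: "(real ^ 'n::{finite,linorder}) set \<Rightarrow> (real ^ 'n::{finite,linorder} \<Rightarrow> 'n::{finite,linorder} clif) \<Rightarrow> bool" where
  "inframonogenic \<Omega> f \<longleftrightarrow> (\<forall>x\<in>\<Omega>. dirac_r (dirac_l f) x = 0)"

definition left_monogenic_k :: "nat \<Rightarrow> (real ^ 'n::{finite,linorder}) set \<Rightarrow> (real ^ 'n::{finite,linorder} \<Rightarrow> 'n::{finite,linorder} clif) \<Rightarrow> bool" where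
  "left_monogenic_k k \<Omega> f \<longleftrightarrow> (\<forall>x\<in>\<Omega>. (dirac_l ^^ k) f x = 0)"

definition right_monogenic_k :: "nat \<Rightarrow> (real ^ 'n::{finite,linorder}) set \<Rightarrow> (real ^ 'n::{finite,linorder} \<Rightarrow> 'n::{finite,linorder} clif) \<Rightarrow> bool" where
  "right_monogenic_k k \<Omega> f \<longleftrightarrow> (\<forall>x\<in>\<Omega>. (dirac_r ^^ k) f x = 0)"

end

theory Submission
  imports Defs
begin

abbreviation e :: "'n::{finite,linorder} \<Rightarrow> 'n clif" where "e j \<equiv> cbasis {j}"

lemma cmul_add_left: "(u + v) \<odot> w = u \<odot> w + v \<odot> w"
  by (simp add: vec_eq_iff cmul_def sum.distrib algebra_simps)
lemma cmul_add_right: "w \<odot> (u + v) = w \<odot> u + w \<odot> v"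
  by (simp add: vec_eq_iff cmul_def sum.distrib algebra_simps)
lemma cmul_scaleR_left: "(r *\<^sub>R u) \<odot> w = r *\<^sub>R (u \<odot> w)"
  by (simp add: vec_eq_iff cmul_def sum_distrib_left algebra_simps)
lemma cmul_scaleR_right: "w \<odot> (r *\<^sub>R u) = r *\<^sub>R (w \<odot> u)"
  by (simp add: vec_eq_iff cmul_def sum_distrib_left algebra_simps)
lemma cmul_zero_left[simp]: "0 \<odot> w = 0"
  by (simp add: vec_eq_iff cmul_def)
lemma cmul_zero_right[simp]: "w \<odot> 0 = 0"
  by (simp add: vec_eq_iff cmul_def)
lemma cmul_minus_left: "(- u) \<odot> w = - (u \<odot> w)"
  by (simp add: vec_eq_iff cmul_def sum_negf)
lemma cmul_minus_right: "w \<odot> (- u) = - (w \<odot> u)"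
  by (simp add: vec_eq_iff cmul_def sum_negf)
lemma cmul_diff_left: "(u - v) \<odot> w = u \<odot> w - v \<odot> w"
  by (simp add: vec_eq_iff cmul_def sum_subtractf algebra_simps)
lemma cmul_diff_right: "w \<odot> (u - v) = w \<odot> u - w \<odot> v"
  by (simp add: vec_eq_iff cmul_def sum_subtractf algebra_simps)
lemma cmul_sum_left: "(\<Sum>i\<in>I. f i) \<odot> w = (\<Sum>i\<in>I. f i \<odot> w)"
  by (induction I rule: infinite_finite_induct) (simp_all add: cmul_add_left)
lemma cmul_sum_right: "w \<odot> (\<Sum>i\<in>I. f i) = (\<Sum>i\<in>I. w \<odot> f i)"
  by (induction I rule: infinite_finite_induct) (simp_all add: cmul_add_right)

lemmas cmul_lin = cmul_add_left cmul_add_right cmul_scaleR_left cmul_scaleR_right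
  cmul_minus_left cmul_minus_right cmul_diff_left cmul_diff_right cmul_sum_left cmul_sum_right

lemma bilinear_cmul: "bilinear (\<odot>)"
  by (simp add: bilinear_def linear_iff cmul_lin)

lemma bounded_bilinear_cmul: "bounded_bilinear (\<odot>)"
  using bilinear_cmul bilinear_conv_bounded_bilinear by blast

lemma clif_expand: "u = (\<Sum>A\<in>UNIV. u $ A *\<^sub>R cbasis A)"
proof -
  have "(\<Sum>x\<in>UNIV. u $ x * (if i = x then 1 else 0)) = u $ i" for i
  proof -
    have "(\<Sum>x\<in>UNIV. u $ x * (if i = x then 1 else 0)) = (\<Sum>x\<in>UNIV. if i = x then u $ x else 0)"
      by (rule sum.cong) auto
    then show ?thesis by simp
  qed
  then show ?thesis by (simp add: vec_eq_iff cbasis_def)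
qed

lemma cbasis_mul: "cbasis A \<odot> cbasis B = csign A B *\<^sub>R cbasis (sym_diff A B)"
proof -
  have *: "(sym_diff A C = B) \<longleftrightarrow> (C = sym_diff A B)" for C by blast
  have **: "sym_diff A (sym_diff A B) = B" by blast
  have "(cbasis A \<odot> cbasis B) $ C = (\<Sum>A'\<in>UNIV. if A' = A then csign A (sym_diff A C) * (if sym_diff A C = B then 1 else 0) else 0)" for C
    unfolding cmul_def cbasis_def vec_lambda_beta by (rule sum.cong) auto
  then have "(cbasis A \<odot> cbasis B) $ C = (csign A B *\<^sub>R cbasis (sym_diff A B)) $ C" for C
    by (auto simp: cbasis_def * **)
  then show ?thesis by (simp add: vec_eq_iff)
qed

lemma csign_left: "csign {i} B = (-1) ^ (card {b\<in>B. b < i} + (if i \<in> B then 1 else 0))"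
proof -
  have "{(a, b). a \<in> {i} \<and> b \<in> B \<and> b < a} = Pair i ` {b\<in>B. b < i}" by auto
  then have "card {(a, b). a \<in> {i} \<and> b \<in> B \<and> b < a} = card {b\<in>B. b < i}"
    by (simp add: card_image inj_on_def)
  moreover have "card ({i} \<inter> B) = (if i \<in> B then 1 else 0)" by auto
  ultimately show ?thesis by (simp add: csign_def)
qed

lemma csign_right: "csign B {j} = (-1) ^ (card {a\<in>B. j < a} + (if j \<in> B then 1 else 0))"
proof -
  have "{(a, b). a \<in> B \<and> b \<in> {j} \<and> b < a} = (\<lambda>a. (a, j)) ` {a\<in>B. j < a}" by auto
  then have "card {(a, b). a \<in> B \<and> b \<in> {j} \<and> b < a} = card {a\<in>B. j < a}"
    by (simp add: card_image inj_on_def)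
  moreover have "card (B \<inter> {j}) = (if j \<in> B then 1 else 0)" by auto
  ultimately show ?thesis by (simp add: csign_def)
qed

lemma sd_single: "sym_diff B {j} = (if j \<in> B then B - {j} else insert j B)" by auto

lemma card_ins_lt: "j \<notin> (B::'n::{finite,linorder} set) \<Longrightarrow>
  card {b \<in> insert j B. b < i} = card {b\<in>B. b < i} + (if j < i then 1 else 0)"
proof (cases "j < i")
  case True
  assume "j \<notin> B"
  then have "{b \<in> insert j B. b < i} = insert j {b\<in>B. b < i}" "j \<notin> {b\<in>B. b < i}" using True by auto
  then show ?thesis using True by simp
next
  case False
  then have "{b \<in> insert j B. b < i} = {b\<in>B. b < i}" by auto
  then show ?thesis using False by simp
qed

lemma card_ins_gt: "j \<notin> (B::'n::{finite,linorder} set) \<Longrightarrow>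
  card {b \<in> insert j B. i < b} = card {b\<in>B. i < b} + (if i < j then 1 else 0)"
proof (cases "i < j")
  case True
  assume "j \<notin> B"
  then have "{b \<in> insert j B. i < b} = insert j {b\<in>B. i < b}" "j \<notin> {b\<in>B. i < b}" using True by auto
  then show ?thesis using True by simp
next
  case False
  then have "{b \<in> insert j B. i < b} = {b\<in>B. i < b}" by auto
  then show ?thesis using False by simp
qed

lemma csign_sq: "csign A B * csign A B = 1"
  by (simp add: csign_def flip: power_mult_distrib)

lemma sL_ins: "i \<noteq> j \<Longrightarrow> j \<notin> B \<Longrightarrow> csign {i} (insert (j::'n::{finite,linorder}) B) = (if j < i then -1 else 1) * csign {i} B"
  unfolding csign_left card_ins_lt by (simp add: power_add)

lemma sL_toggle: "i \<noteq> j \<Longrightarrow> csign {i} (sym_diff B {j::'n::{finite,linorder}}) = (if j < i then -1 else 1) * csign {i} B"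
proof (cases "j \<in> B")
  case True
  assume ij: "i \<noteq> j"
  have B: "B = insert j (B - {j})" using True by auto
  have "csign {i} B = (if j < i then -1 else 1) * csign {i} (B - {j})"
    using sL_ins[OF ij, of "B - {j}"] B by simp
  then show ?thesis using True by (auto simp: sd_single)
next
  case False
  assume ij: "i \<noteq> j"
  then show ?thesis using False sL_ins[OF ij False] by (simp add: sd_single)
qed

lemma sL_self: "csign {i} (sym_diff B {i::'n::{finite,linorder}}) = - csign {i} B"
proof -
  have "{b\<in>sym_diff B {i}. b < i} = {b\<in>B. b < i}" by auto
  then show ?thesis unfolding csign_left by (simp add: power_add)
qed

lemma sR_ins: "i \<noteq> j \<Longrightarrow> i \<notin> B \<Longrightarrow> csign (insert i B) {j::'n::{finite,linorder}} = (if j < i then -1 else 1) * csign B {j}"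
  unfolding csign_right card_ins_gt by (simp add: power_add)

lemma sR_toggle: "i \<noteq> j \<Longrightarrow> csign (sym_diff B {i}) {j::'n::{finite,linorder}} = (if j < i then -1 else 1) * csign B {j}"
proof (cases "i \<in> B")
  case True
  assume ij: "i \<noteq> j"
  have B: "B = insert i (B - {i})" using True by auto
  have "csign B {j} = (if j < i then -1 else 1) * csign (B - {i}) {j}"
    using sR_ins[OF ij, of "B - {i}"] B by simp
  then show ?thesis using True by (auto simp: sd_single)
next
  case False
  assume ij: "i \<noteq> j"
  then show ?thesis using False sR_ins[OF ij False] by (simp add: sd_single)
qed

lemma sR_self: "csign (sym_diff B {j}) {j::'n::{finite,linorder}} = - csign B {j}"
proof -
  have "{b\<in>sym_diff B {j}. j < b} = {b\<in>B. j < b}" by auto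
  then show ?thesis unfolding csign_right by (simp add: power_add)
qed

lemma e_mul_basis: "e j \<odot> cbasis A = csign {j} A *\<^sub>R cbasis (sym_diff A {j})"
  by (simp add: cbasis_mul Un_commute)
lemma basis_mul_e: "cbasis A \<odot> e j = csign A {j} *\<^sub>R cbasis (sym_diff A {j})"
  by (simp add: cbasis_mul)

lemma sd_sd[simp]: "sym_diff (sym_diff A {j}) {j} = A" by blast
lemma sd_swap: "sym_diff (sym_diff A {i}) {j} = sym_diff (sym_diff A {j}) {i}" by blast

lemma LL_basis: "e i \<odot> (e j \<odot> cbasis A) = (csign {j} A * csign {i} (sym_diff A {j})) *\<^sub>R cbasis (sym_diff (sym_diff A {j}) {i})"
  by (simp add: e_mul_basis cmul_scaleR_right)
lemma RR_basis: "(cbasis A \<odot> e i) \<odot> e j = (csign A {i} * csign (sym_diff A {i}) {j}) *\<^sub>R cbasis (sym_diff (sym_diff A {i}) {j})"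
  by (simp add: basis_mul_e cmul_scaleR_left)
lemma LR_basis: "e i \<odot> (cbasis A \<odot> e j) = (csign A {j} * csign {i} (sym_diff A {j})) *\<^sub>R cbasis (sym_diff (sym_diff A {j}) {i})"
  by (simp add: e_mul_basis basis_mul_e cmul_scaleR_right)
lemma RL_basis: "(e i \<odot> cbasis A) \<odot> e j = (csign {i} A * csign (sym_diff A {i}) {j}) *\<^sub>R cbasis (sym_diff (sym_diff A {i}) {j})"
  by (simp add: e_mul_basis basis_mul_e cmul_scaleR_left)

lemma F1b: "e i \<odot> (e j \<odot> cbasis A) + e j \<odot> (e i \<odot> cbasis A) = (if i = j then -2 else 0) *\<^sub>R cbasis A"
proof (cases "i = j")
  case True
  have "e i \<odot> (e i \<odot> cbasis A) = - cbasis A"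
    unfolding LL_basis sL_self sd_sd using csign_sq[of "{i}" A] by simp
  then show ?thesis using True by (simp add: scaleR_2)
next
  case False
  then have ji: "j \<noteq> i" by auto
  have 1: "e i \<odot> (e j \<odot> cbasis A) = (csign {j} A * ((if j < i then -1 else 1) * csign {i} A)) *\<^sub>R cbasis (sym_diff (sym_diff A {j}) {i})"
    unfolding LL_basis sL_toggle[OF False] ..
  have 2: "e j \<odot> (e i \<odot> cbasis A) = (csign {i} A * ((if i < j then -1 else 1) * csign {j} A)) *\<^sub>R cbasis (sym_diff (sym_diff A {j}) {i})"
    unfolding LL_basis sL_toggle[OF ji] sd_swap[of A i j] ..
  have "csign {j} A * ((if j < i then -1 else 1) * csign {i} A) + csign {i} A * ((if i < j then -1 else 1) * csign {j} A) = 0"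
    using False by (cases "i < j") (auto simp: linorder_neq_iff)
  then show ?thesis unfolding 1 2 scaleR_add_left[symmetric] using False by simp
qed

lemma F2b: "(cbasis A \<odot> e i) \<odot> e j + (cbasis A \<odot> e j) \<odot> e i = (if i = j then -2 else 0) *\<^sub>R cbasis A"
proof (cases "i = j")
  case True
  have "(cbasis A \<odot> e i) \<odot> e i = - cbasis A"
    unfolding RR_basis sR_self using csign_sq[of A "{i}"] by simp
  then show ?thesis using True by (simp add: scaleR_2)
next
  case False
  then have ji: "j \<noteq> i" by auto
  have 1: "(cbasis A \<odot> e i) \<odot> e j = (csign A {i} * ((if j < i then -1 else 1) * csign A {j})) *\<^sub>R cbasis (sym_diff (sym_diff A {i}) {j})"
    unfolding RR_basis sR_toggle[OF False] ..
  have 2: "(cbasis A \<odot> e j) \<odot> e i = (csign A {j} * ((if i < j then -1 else 1) * csign A {i})) *\<^sub>R cbasis (sym_diff (sym_diff A {i}) {j})"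
    unfolding RR_basis sR_toggle[OF ji] sd_swap[of A j i] ..
  have "csign A {i} * ((if j < i then -1 else 1) * csign A {j}) + csign A {j} * ((if i < j then -1 else 1) * csign A {i}) = 0"
    using False by (cases "i < j") (auto simp: linorder_neq_iff)
  then show ?thesis unfolding 1 2 scaleR_add_left[symmetric] using False by simp
qed

lemma F3b: "e i \<odot> (cbasis A \<odot> e j) = (e i \<odot> cbasis A) \<odot> e j"
proof (cases "i = j")
  case True
  then show ?thesis by (simp add: LR_basis RL_basis sR_self sL_self)
next
  case False
  then have ji: "j \<noteq> i" by auto
  show ?thesis unfolding LR_basis RL_basis sR_toggle[OF False] sL_toggle[OF False] sd_swap[of A j i]
    by (simp add: algebra_simps)
qed

lemma card_split: "card {a\<in>A. j < a} + card {a\<in>A. a < (j::'n::{finite,linorder})} + (if j \<in> A then 1 else 0) = card A"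
proof -
  have eq: "A = ({a\<in>A. j < a} \<union> {a\<in>A. a < j}) \<union> (A \<inter> {j})" by auto
  have c1: "card A = card (({a\<in>A. j < a} \<union> {a\<in>A. a < j}) \<union> (A \<inter> {j}))"
    using eq by (rule arg_cong)
  have "card (({a\<in>A. j < a} \<union> {a\<in>A. a < j}) \<union> (A \<inter> {j})) = card ({a\<in>A. j < a} \<union> {a\<in>A. a < j}) + card (A \<inter> {j})"
    by (rule card_Un_disjoint) auto
  with c1 have "card A = card ({a\<in>A. j < a} \<union> {a\<in>A. a < j}) + card (A \<inter> {j})" by (rule trans)
  also have "card ({a\<in>A. j < a} \<union> {a\<in>A. a < j}) = card {a\<in>A. j < a} + card {a\<in>A. a < j}"
    by (rule card_Un_disjoint) auto
  finally show ?thesis by auto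
qed

lemma F4b: "e j \<odot> (cbasis A \<odot> e j) = (if j \<in> A then (-1) ^ card A else - ((-1) ^ card A)) *\<^sub>R cbasis A"
proof -
  have "{b\<in>sym_diff A {j}. b < j} = {b\<in>A. b < j}" by auto
  then have "csign A {j} * csign {j} (sym_diff A {j}) = (-1) ^ (card {a\<in>A. j < a} + card {a\<in>A. a < j} + (if j \<in> A then 1 else 0) + (if j \<in> A then 0 else 1))"
    unfolding csign_left csign_right by (simp add: power_add)
  also have "\<dots> = (if j \<in> A then (-1) ^ card A else - ((-1) ^ card A))"
  proof -
    have cs: "card {a\<in>A. j < a} + card {a\<in>A. a < j} + (if j \<in> A then 1 else 0) + (if j \<in> A then 0 else 1) = card A + (if j \<in> A then 0 else 1)"
      using card_split[of A j] by simp
    show ?thesis unfolding cs by (simp add: power_add)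
  qed
  finally show ?thesis unfolding LR_basis by simp
qed

lemma clif_ext:
  fixes f g :: "'n::{finite,linorder} clif \<Rightarrow> 'm::real_vector"
  assumes fa: "\<And>u v. f (u + v) = f u + f v" and fs: "\<And>r u. f (r *\<^sub>R u) = r *\<^sub>R f u"
    and ga: "\<And>u v. g (u + v) = g u + g v" and gs: "\<And>r u. g (r *\<^sub>R u) = r *\<^sub>R g u"
    and b: "\<And>A. f (cbasis A) = g (cbasis A)"
  shows "f u = g u"
proof -
  have f0: "f 0 = 0" using fs[of 0 0] by simp
  have g0: "g 0 = 0" using gs[of 0 0] by simp
  have "f (\<Sum>A\<in>S. u $ A *\<^sub>R cbasis A) = g (\<Sum>A\<in>S. u $ A *\<^sub>R cbasis A)" for S
    by (induction S rule: infinite_finite_induct) (simp_all add: f0 g0 fa ga fs gs b)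
  then show ?thesis by (metis clif_expand)
qed

lemma F1: "e i \<odot> (e j \<odot> u) + e j \<odot> (e i \<odot> u) = (if i = j then -2 else 0) *\<^sub>R u"
  by (rule clif_ext[where u=u]) (simp_all add: cmul_lin F1b algebra_simps)

lemma F2: "(u \<odot> e i) \<odot> e j + (u \<odot> e j) \<odot> e i = (if i = j then -2 else 0) *\<^sub>R u"
  by (rule clif_ext[where u=u]) (simp_all add: cmul_lin F2b algebra_simps)

lemma F3: "e i \<odot> (u \<odot> e j) = (e i \<odot> u) \<odot> e j"
  by (rule clif_ext[where u=u]) (simp_all add: cmul_lin F3b algebra_simps)

lemma coef_sum: "(\<Sum>j\<in>UNIV. (if j \<in> (A::'n::{finite,linorder} set) then (-1)^card A else - ((-1)^card A)) :: real) = (-1)^card A * (2 * real (card A) - real CARD('n))"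
  (is "?L = ?R")
proof -
  have "?L = (\<Sum>j\<in>UNIV \<inter> {j. j \<in> A}. (-1)^card A) + (\<Sum>j\<in>UNIV \<inter> - {j. j \<in> A}. - ((-1)^card A))"
    by (rule sum.If_cases) simp
  also have "UNIV \<inter> {j. j \<in> A} = A" by auto
  also have "UNIV \<inter> - {j. j \<in> A} = - A" by auto
  also have "(\<Sum>j\<in>A. (-1)^card A) + (\<Sum>j\<in>- A. - ((-1)^card A)) = real (card A) * (-1)^card A - real (card (- A)) * (-1)^card A"
    by (simp only: sum_constant sum_negf)
  also have "real (card (- A)) = real CARD('n) - real (card A)"
  proof -
    have "card (- A) = CARD('n) - card A" by (simp add: Compl_eq_Diff_UNIV card_Diff_subset)
    then show ?thesis using card_mono[of UNIV A] by (simp add: of_nat_diff)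
  qed
  finally show ?thesis by (simp add: algebra_simps)
qed

lemma F4:
  assumes "kvector (CARD('n) div 2) u" "even CARD('n::{finite,linorder})"
  shows "(\<Sum>j\<in>UNIV. e j \<odot> (u \<odot> e j)) = (0::'n clif)"
proof -
  have "(\<Sum>j\<in>UNIV. e j \<odot> (u \<odot> e j)) = (\<Sum>j\<in>UNIV. e j \<odot> ((\<Sum>A\<in>UNIV. u $ A *\<^sub>R cbasis A) \<odot> e j))"
    by (simp flip: clif_expand)
  also have "\<dots> = (\<Sum>j\<in>UNIV. \<Sum>A\<in>UNIV. (u $ A * (if j \<in> A then (-1)^card A else - ((-1)^card A))) *\<^sub>R cbasis A)"
    by (simp add: cmul_lin F4b)
  also have "\<dots> = (\<Sum>A\<in>UNIV. (u $ A * (\<Sum>j\<in>UNIV. (if j \<in> A then (-1)^card A else - ((-1)^card A)))) *\<^sub>R cbasis A)"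
    by (subst sum.swap) (simp add: sum_distrib_left scaleR_sum_left)
  also have "\<dots> = 0"
  proof (rule sum.neutral, rule ballI)
    fix A :: "'n set"
    show "(u $ A * (\<Sum>j\<in>UNIV. (if j \<in> A then (-1)^card A else - ((-1)^card A)))) *\<^sub>R cbasis A = 0"
    proof (cases "card A = CARD('n) div 2")
      case True
      then have "2 * real (card A) - real CARD('n) = 0" using assms(2)
        by (metis cancel_comm_monoid_add_class.diff_cancel even_two_times_div_two of_nat_mult of_nat_numeral)
      then show ?thesis by (simp add: coef_sum)
    next
      case False
      then show ?thesis using assms(1) by (simp add: kvector_def)
    qed
  qed
  finally show ?thesis .
qed

lemma cvec_expand: "cvec x = (\<Sum>k\<in>UNIV. (x $ k) *\<^sub>R e k)"
  by (simp add: cvec_def)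

lemma L_assoc_X: "e i \<odot> (u \<odot> cvec x) = (e i \<odot> u) \<odot> cvec x"
  by (simp add: cvec_expand cmul_lin F3)

lemma R_assoc_X: "(cvec x \<odot> u) \<odot> e i = cvec x \<odot> (u \<odot> e i)"
  by (simp add: cvec_expand cmul_lin F3)

lemma F1': "e i \<odot> (e j \<odot> u) = (if i = j then -2 else 0) *\<^sub>R u - e j \<odot> (e i \<odot> u)"
  using F1[of i j u] by (simp add: algebra_simps)

lemma F2': "(u \<odot> e j) \<odot> e i = (if i = j then -2 else 0) *\<^sub>R u - (u \<odot> e i) \<odot> e j"
  using F2[of u j i] by (auto simp: algebra_simps)

lemma double_eq: fixes x y :: "'a::real_vector" assumes "x + x = (-2) *\<^sub>R y" shows "x = - y"
proof -
  have "(2::real) *\<^sub>R x = 2 *\<^sub>R (- y)" using assms by (simp add: scaleR_2)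
  then show ?thesis by (rule scaleR_left_imp_eq[rotated]) simp
qed

lemma sum_delta_scale: "(\<Sum>j\<in>UNIV. (if (i::'b::finite) = j then r else 0) *\<^sub>R w j) = r *\<^sub>R (w i :: 'a::real_vector)"
proof -
  have "(\<Sum>j\<in>UNIV. (if i = j then r else 0) *\<^sub>R w j) = (\<Sum>j\<in>UNIV. if i = j then r *\<^sub>R w j else 0)"
    by (rule sum.cong) auto
  then show ?thesis by simp
qed

lemma sym_LL:
  assumes "\<And>i j. w i j = w j i"
  shows "(\<Sum>i\<in>UNIV. \<Sum>j\<in>UNIV. e i \<odot> (e j \<odot> w i j)) = - (\<Sum>i\<in>UNIV. w i i)"
proof -
  let ?S = "(\<Sum>i\<in>UNIV. \<Sum>j\<in>UNIV. e i \<odot> (e j \<odot> w i j))"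
  have "?S = (\<Sum>i\<in>UNIV. \<Sum>j\<in>UNIV. e j \<odot> (e i \<odot> w j i))" by (rule sum.swap)
  also have "\<dots> = (\<Sum>i\<in>UNIV. \<Sum>j\<in>UNIV. e j \<odot> (e i \<odot> w i j))" using assms by simp
  finally have "?S + ?S = (\<Sum>i\<in>UNIV. \<Sum>j\<in>UNIV. e i \<odot> (e j \<odot> w i j) + e j \<odot> (e i \<odot> w i j))"
    by (simp add: sum.distrib)
  also have "\<dots> = (\<Sum>i\<in>UNIV. \<Sum>j\<in>UNIV. (if i = j then -2 else 0) *\<^sub>R w i j)"
    by (simp only: F1)
  also have "\<dots> = (\<Sum>i\<in>UNIV. (-2) *\<^sub>R w i i)" by (simp only: sum_delta_scale)
  also have "\<dots> = (-2) *\<^sub>R (\<Sum>i\<in>UNIV. w i i)" by (simp only: scaleR_sum_right)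
  finally show ?thesis by (rule double_eq)
qed

lemma sym_RR:
  assumes "\<And>i j. w i j = w j i"
  shows "(\<Sum>i\<in>UNIV. \<Sum>j\<in>UNIV. (w i j \<odot> e j) \<odot> e i) = - (\<Sum>i\<in>UNIV. w i i)"
proof -
  let ?S = "(\<Sum>i\<in>UNIV. \<Sum>j\<in>UNIV. (w i j \<odot> e j) \<odot> e i)"
  have "?S = (\<Sum>i\<in>UNIV. \<Sum>j\<in>UNIV. (w j i \<odot> e i) \<odot> e j)" by (rule sum.swap)
  also have "\<dots> = (\<Sum>i\<in>UNIV. \<Sum>j\<in>UNIV. (w i j \<odot> e i) \<odot> e j)" using assms by simp
  finally have "?S + ?S = (\<Sum>i\<in>UNIV. \<Sum>j\<in>UNIV. (w i j \<odot> e j) \<odot> e i + (w i j \<odot> e i) \<odot> e j)"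
    by (simp add: sum.distrib)
  also have "\<dots> = (\<Sum>i\<in>UNIV. \<Sum>j\<in>UNIV. (if j = i then -2 else 0) *\<^sub>R w i j)"
    by (simp only: F2)
  also have "\<dots> = (\<Sum>i\<in>UNIV. \<Sum>j\<in>UNIV. (if i = j then -2 else 0) *\<^sub>R w i j)"
    by (simp only: eq_commute)
  also have "\<dots> = (\<Sum>i\<in>UNIV. (-2) *\<^sub>R w i i)" by (simp only: sum_delta_scale)
  also have "\<dots> = (-2) *\<^sub>R (\<Sum>i\<in>UNIV. w i i)" by (simp only: scaleR_sum_right)
  finally show ?thesis by (rule double_eq)
qed

lemma F4':
  assumes "kvector (CARD('n) div 2) u" "even CARD('n::{finite,linorder})"
  shows "(\<Sum>j\<in>UNIV. (e j \<odot> u) \<odot> e j) = (0::'n clif)"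
  using F4[OF assms] by (simp add: F3)

lemma LL_swap_sum: "(\<Sum>i\<in>UNIV. \<Sum>j\<in>UNIV. e i \<odot> (e j \<odot> v i j)) =
   (\<Sum>i\<in>UNIV. (-2) *\<^sub>R v i i) - (\<Sum>i\<in>UNIV. \<Sum>j\<in>UNIV. e j \<odot> (e i \<odot> v i j))"
proof -
  have "(\<Sum>i\<in>UNIV. \<Sum>j\<in>UNIV. e i \<odot> (e j \<odot> v i j)) =
     (\<Sum>i\<in>UNIV. \<Sum>j\<in>UNIV. (if i = j then -2 else 0) *\<^sub>R v i j - e j \<odot> (e i \<odot> v i j))"
    by (intro sum.cong refl) (rule F1')
  also have "\<dots> = (\<Sum>i\<in>UNIV. (-2) *\<^sub>R v i i) - (\<Sum>i\<in>UNIV. \<Sum>j\<in>UNIV. e j \<odot> (e i \<odot> v i j))"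
    by (simp only: sum_subtractf sum_delta_scale)
  finally show ?thesis .
qed

lemma RR_swap_sum: "(\<Sum>i\<in>UNIV. \<Sum>j\<in>UNIV. (v i j \<odot> e j) \<odot> e i) =
   (\<Sum>i\<in>UNIV. (-2) *\<^sub>R v i i) - (\<Sum>i\<in>UNIV. \<Sum>j\<in>UNIV. (v i j \<odot> e i) \<odot> e j)"
proof -
  have "(\<Sum>i\<in>UNIV. \<Sum>j\<in>UNIV. (v i j \<odot> e j) \<odot> e i) =
     (\<Sum>i\<in>UNIV. \<Sum>j\<in>UNIV. (if i = j then -2 else 0) *\<^sub>R v i j - (v i j \<odot> e i) \<odot> e j)"
    by (intro sum.cong refl) (rule F2')
  also have "\<dots> = (\<Sum>i\<in>UNIV. (-2) *\<^sub>R v i i) - (\<Sum>i\<in>UNIV. \<Sum>j\<in>UNIV. (v i j \<odot> e i) \<odot> e j)"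
    by (simp only: sum_subtractf sum_delta_scale)
  finally show ?thesis .
qed

lemma alg_left:
  fixes b c :: "'n::{finite,linorder} \<Rightarrow> _"
  assumes bs: "\<And>i j. b i j = b j i" and bk: "\<And>i j. kvector (CARD('n) div 2) (b i j)"
    and ev: "even CARD('n)"
  shows "(\<Sum>l\<in>UNIV. e l \<odot> (\<Sum>i\<in>UNIV. e i \<odot> (\<Sum>j\<in>UNIV. e j \<odot>
            (((c l i j \<odot> cvec x + b i j \<odot> e l) + b l j \<odot> e i) + b l i \<odot> e j))))
       = (\<Sum>l\<in>UNIV. e l \<odot> (\<Sum>i\<in>UNIV. e i \<odot> (\<Sum>j\<in>UNIV. e j \<odot> c l i j))) \<odot> cvec x
         + (-2) *\<^sub>R (\<Sum>j\<in>UNIV. (\<Sum>i\<in>UNIV. e i \<odot> b j i) \<odot> e j)"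
proof -
  define T :: "('n \<Rightarrow> 'n \<Rightarrow> 'n \<Rightarrow> 'n clif) \<Rightarrow> 'n clif" where "T P = (\<Sum>l\<in>UNIV. e l \<odot> (\<Sum>i\<in>UNIV. e i \<odot> (\<Sum>j\<in>UNIV. e j \<odot> P l i j)))" for P
  have split: "(\<Sum>l\<in>UNIV. e l \<odot> (\<Sum>i\<in>UNIV. e i \<odot> (\<Sum>j\<in>UNIV. e j \<odot>
            (((c l i j \<odot> cvec x + b i j \<odot> e l) + b l j \<odot> e i) + b l i \<odot> e j))))
     = T (\<lambda>l i j. c l i j \<odot> cvec x) + T (\<lambda>l i j. b i j \<odot> e l) + T (\<lambda>l i j. b l j \<odot> e i)
       + T (\<lambda>l i j. b l i \<odot> e j)"
    unfolding T_def by (simp only: cmul_add_right sum.distrib)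
  have t1: "T (\<lambda>l i j. c l i j \<odot> cvec x) = (\<Sum>l\<in>UNIV. e l \<odot> (\<Sum>i\<in>UNIV. e i \<odot> (\<Sum>j\<in>UNIV. e j \<odot> c l i j))) \<odot> cvec x"
    unfolding T_def by (simp only: cmul_sum_left cmul_sum_right L_assoc_X)
  have t4: "T (\<lambda>l i j. b l i \<odot> e j) = 0"
    unfolding T_def by (simp only: F4[OF bk ev] cmul_zero_right sum.neutral_const)
  have in2: "(\<Sum>i\<in>UNIV. e i \<odot> (\<Sum>j\<in>UNIV. e j \<odot> (b i j \<odot> e l))) = - (\<Sum>i\<in>UNIV. b i i \<odot> e l)" for l
  proof -
    have "b i j \<odot> e l = b j i \<odot> e l" for i j using bs by metis
    from sym_LL[of "\<lambda>i j. b i j \<odot> e l", OF this] show ?thesis by (simp only: cmul_sum_right)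
  qed
  have t2: "T (\<lambda>l i j. b i j \<odot> e l) = 0"
  proof -
    have "T (\<lambda>l i j. b i j \<odot> e l) = (\<Sum>l\<in>UNIV. e l \<odot> (- (\<Sum>i\<in>UNIV. b i i \<odot> e l)))"
      unfolding T_def in2 ..
    also have "\<dots> = - (\<Sum>l\<in>UNIV. \<Sum>i\<in>UNIV. e l \<odot> (b i i \<odot> e l))"
      by (simp only: cmul_sum_right cmul_minus_right sum_negf)
    also have "\<dots> = - (\<Sum>i\<in>UNIV. \<Sum>l\<in>UNIV. e l \<odot> (b i i \<odot> e l))"
      by (subst sum.swap) (rule refl)
    also have "\<dots> = 0" by (simp only: F4[OF bk ev] sum.neutral_const minus_zero)
    finally show ?thesis .
  qed
  have in3: "(\<Sum>i\<in>UNIV. e i \<odot> (\<Sum>j\<in>UNIV. e j \<odot> (b l j \<odot> e i))) = (-2) *\<^sub>R (\<Sum>i\<in>UNIV. b l i \<odot> e i)" for l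
  proof -
    have "(\<Sum>i\<in>UNIV. e i \<odot> (\<Sum>j\<in>UNIV. e j \<odot> (b l j \<odot> e i))) = (\<Sum>i\<in>UNIV. \<Sum>j\<in>UNIV. e i \<odot> (e j \<odot> (b l j \<odot> e i)))"
      by (simp only: cmul_sum_right)
    also have "\<dots> = (\<Sum>i\<in>UNIV. (-2) *\<^sub>R (b l i \<odot> e i)) - (\<Sum>i\<in>UNIV. \<Sum>j\<in>UNIV. e j \<odot> (e i \<odot> (b l j \<odot> e i)))"
      by (rule LL_swap_sum)
    also have "(\<Sum>i\<in>UNIV. \<Sum>j\<in>UNIV. e j \<odot> (e i \<odot> (b l j \<odot> e i))) = (\<Sum>j\<in>UNIV. e j \<odot> (\<Sum>i\<in>UNIV. e i \<odot> (b l j \<odot> e i)))"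
      by (subst sum.swap) (simp only: cmul_sum_right)
    also have "\<dots> = 0" by (simp only: F4[OF bk ev] cmul_zero_right sum.neutral_const)
    finally show ?thesis by (simp only: scaleR_sum_right diff_zero)
  qed
  have t3: "T (\<lambda>l i j. b l j \<odot> e i) = (-2) *\<^sub>R (\<Sum>j\<in>UNIV. (\<Sum>i\<in>UNIV. e i \<odot> b j i) \<odot> e j)"
  proof -
    have "T (\<lambda>l i j. b l j \<odot> e i) = (\<Sum>l\<in>UNIV. e l \<odot> ((-2) *\<^sub>R (\<Sum>i\<in>UNIV. b l i \<odot> e i)))"
      unfolding T_def in3 ..
    also have "\<dots> = (-2) *\<^sub>R (\<Sum>l\<in>UNIV. \<Sum>i\<in>UNIV. e l \<odot> (b l i \<odot> e i))"
      by (simp only: cmul_scaleR_right cmul_sum_right scaleR_sum_right)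
    also have "(\<Sum>l\<in>UNIV. \<Sum>i\<in>UNIV. e l \<odot> (b l i \<odot> e i)) = (\<Sum>l\<in>UNIV. \<Sum>i\<in>UNIV. e l \<odot> (b i l \<odot> e i))"
      by (intro sum.cong refl) (metis bs)
    also have "\<dots> = (\<Sum>i\<in>UNIV. \<Sum>l\<in>UNIV. e l \<odot> (b i l \<odot> e i))" by (rule sum.swap)
    also have "\<dots> = (\<Sum>j\<in>UNIV. (\<Sum>i\<in>UNIV. e i \<odot> b j i) \<odot> e j)"
      by (simp only: cmul_sum_left F3)
    finally show ?thesis .
  qed
  show ?thesis unfolding split t1 t2 t3 t4 by (simp only: add_0_right)
qed

lemma alg_right:
  fixes b c :: "'n::{finite,linorder} \<Rightarrow> _"
  assumes bs: "\<And>i j. b i j = b j i" and bk: "\<And>i j. kvector (CARD('n) div 2) (b i j)"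
    and ev: "even CARD('n)"
  shows "(\<Sum>l\<in>UNIV. (\<Sum>i\<in>UNIV. (\<Sum>j\<in>UNIV. (e j \<odot> b l i + (e i \<odot> b l j + (e l \<odot> b i j + cvec x \<odot> c l i j))) \<odot> e j) \<odot> e i) \<odot> e l)
       = cvec x \<odot> (\<Sum>l\<in>UNIV. (\<Sum>i\<in>UNIV. (\<Sum>j\<in>UNIV. c l i j \<odot> e j) \<odot> e i) \<odot> e l)
         + (-2) *\<^sub>R (\<Sum>j\<in>UNIV. (\<Sum>i\<in>UNIV. e i \<odot> b j i) \<odot> e j)"
proof -
  define T :: "('n \<Rightarrow> 'n \<Rightarrow> 'n \<Rightarrow> 'n clif) \<Rightarrow> 'n clif" where "T P = (\<Sum>l\<in>UNIV. (\<Sum>i\<in>UNIV. (\<Sum>j\<in>UNIV. P l i j \<odot> e j) \<odot> e i) \<odot> e l)" for P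
  have split: "(\<Sum>l\<in>UNIV. (\<Sum>i\<in>UNIV. (\<Sum>j\<in>UNIV. (e j \<odot> b l i + (e i \<odot> b l j + (e l \<odot> b i j + cvec x \<odot> c l i j))) \<odot> e j) \<odot> e i) \<odot> e l)
     = T (\<lambda>l i j. e j \<odot> b l i) + (T (\<lambda>l i j. e i \<odot> b l j) + (T (\<lambda>l i j. e l \<odot> b i j) + T (\<lambda>l i j. cvec x \<odot> c l i j)))"
    unfolding T_def by (simp only: cmul_add_left sum.distrib)
  have tX: "T (\<lambda>l i j. cvec x \<odot> c l i j) = cvec x \<odot> (\<Sum>l\<in>UNIV. (\<Sum>i\<in>UNIV. (\<Sum>j\<in>UNIV. c l i j \<odot> e j) \<odot> e i) \<odot> e l)"
    unfolding T_def by (simp only: cmul_sum_left cmul_sum_right R_assoc_X)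
  have ta: "T (\<lambda>l i j. e j \<odot> b l i) = 0"
    unfolding T_def by (simp only: F4'[OF bk ev] cmul_zero_left sum.neutral_const)
  have inc: "(\<Sum>i\<in>UNIV. (\<Sum>j\<in>UNIV. (e l \<odot> b i j) \<odot> e j) \<odot> e i) = - (\<Sum>i\<in>UNIV. e l \<odot> b i i)" for l
  proof -
    have "e l \<odot> b i j = e l \<odot> b j i" for i j using bs by metis
    from sym_RR[of "\<lambda>i j. e l \<odot> b i j", OF this] show ?thesis by (simp only: cmul_sum_left)
  qed
  have tc: "T (\<lambda>l i j. e l \<odot> b i j) = 0"
  proof -
    have "T (\<lambda>l i j. e l \<odot> b i j) = (\<Sum>l\<in>UNIV. (- (\<Sum>i\<in>UNIV. e l \<odot> b i i)) \<odot> e l)"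
      unfolding T_def inc ..
    also have "\<dots> = - (\<Sum>l\<in>UNIV. \<Sum>i\<in>UNIV. (e l \<odot> b i i) \<odot> e l)"
      by (simp only: cmul_sum_left cmul_minus_left sum_negf)
    also have "\<dots> = - (\<Sum>i\<in>UNIV. \<Sum>l\<in>UNIV. (e l \<odot> b i i) \<odot> e l)"
      by (subst sum.swap) (rule refl)
    also have "\<dots> = 0" by (simp only: F4'[OF bk ev] sum.neutral_const minus_zero)
    finally show ?thesis .
  qed
  have inb: "(\<Sum>i\<in>UNIV. (\<Sum>j\<in>UNIV. (e i \<odot> b l j) \<odot> e j) \<odot> e i) = (-2) *\<^sub>R (\<Sum>i\<in>UNIV. e i \<odot> b l i)" for l
  proof -
    have "(\<Sum>i\<in>UNIV. (\<Sum>j\<in>UNIV. (e i \<odot> b l j) \<odot> e j) \<odot> e i) = (\<Sum>i\<in>UNIV. \<Sum>j\<in>UNIV. ((e i \<odot> b l j) \<odot> e j) \<odot> e i)"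
      by (simp only: cmul_sum_left)
    also have "\<dots> = (\<Sum>i\<in>UNIV. (-2) *\<^sub>R (e i \<odot> b l i)) - (\<Sum>i\<in>UNIV. \<Sum>j\<in>UNIV. ((e i \<odot> b l j) \<odot> e i) \<odot> e j)"
      by (rule RR_swap_sum)
    also have "(\<Sum>i\<in>UNIV. \<Sum>j\<in>UNIV. ((e i \<odot> b l j) \<odot> e i) \<odot> e j) = (\<Sum>j\<in>UNIV. (\<Sum>i\<in>UNIV. (e i \<odot> b l j) \<odot> e i) \<odot> e j)"
      by (subst sum.swap) (simp only: cmul_sum_left)
    also have "\<dots> = 0" by (simp only: F4'[OF bk ev] cmul_zero_left sum.neutral_const)
    finally show ?thesis by (simp only: scaleR_sum_right diff_zero)
  qed
  have tb: "T (\<lambda>l i j. e i \<odot> b l j) = (-2) *\<^sub>R (\<Sum>j\<in>UNIV. (\<Sum>i\<in>UNIV. e i \<odot> b j i) \<odot> e j)"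
    unfolding T_def inb cmul_scaleR_left scaleR_sum_right[symmetric] ..
  show ?thesis unfolding split tX ta tb tc by (simp only: add_0_left add_0_right) (rule add.commute)
qed

lemma alg_L3:
  fixes c :: "'n::{finite,linorder} \<Rightarrow> _"
  assumes c1: "\<And>l i j. c l i j = c i l j" and c2: "\<And>l i j. c l i j = c l j i"
  shows "(\<Sum>l\<in>UNIV. e l \<odot> (\<Sum>i\<in>UNIV. e i \<odot> (\<Sum>j\<in>UNIV. e j \<odot> c l i j)))
       = (\<Sum>l\<in>UNIV. (\<Sum>j\<in>UNIV. (\<Sum>i\<in>UNIV. e i \<odot> c l j i) \<odot> e j) \<odot> e l)"
proof -
  have l1: "(\<Sum>i\<in>UNIV. e i \<odot> (\<Sum>j\<in>UNIV. e j \<odot> c l i j)) = - (\<Sum>i\<in>UNIV. c l i i)" for l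
    using sym_LL[of "c l", OF c2] by (simp only: cmul_sum_right)
  have L: "(\<Sum>l\<in>UNIV. e l \<odot> (\<Sum>i\<in>UNIV. e i \<odot> (\<Sum>j\<in>UNIV. e j \<odot> c l i j)))
      = - (\<Sum>l\<in>UNIV. \<Sum>i\<in>UNIV. e l \<odot> c l i i)"
    unfolding l1 by (simp only: cmul_minus_right cmul_sum_right sum_negf)
  have "(\<Sum>l\<in>UNIV. (\<Sum>j\<in>UNIV. (\<Sum>i\<in>UNIV. e i \<odot> c l j i) \<odot> e j) \<odot> e l)
      = (\<Sum>l\<in>UNIV. \<Sum>j\<in>UNIV. \<Sum>i\<in>UNIV. e i \<odot> ((c l j i \<odot> e j) \<odot> e l))"
    by (simp only: cmul_sum_left F3)
  also have "\<dots> = (\<Sum>l\<in>UNIV. \<Sum>i\<in>UNIV. \<Sum>j\<in>UNIV. e i \<odot> ((c l j i \<odot> e j) \<odot> e l))"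
    by (rule sum.cong[OF refl], rule sum.swap)
  also have "\<dots> = (\<Sum>i\<in>UNIV. \<Sum>l\<in>UNIV. \<Sum>j\<in>UNIV. e i \<odot> ((c l j i \<odot> e j) \<odot> e l))"
    by (rule sum.swap)
  also have "\<dots> = (\<Sum>i\<in>UNIV. e i \<odot> (\<Sum>l\<in>UNIV. \<Sum>j\<in>UNIV. (c l j i \<odot> e j) \<odot> e l))"
    by (simp only: cmul_sum_right)
  also have "\<dots> = (\<Sum>i\<in>UNIV. e i \<odot> (- (\<Sum>l\<in>UNIV. c l l i)))"
  proof -
    have "c l j i = c j l i" for l j i by (rule c1)
    then show ?thesis using sym_RR[of "\<lambda>l j. c l j i" for i] by simp
  qed
  also have "\<dots> = - (\<Sum>i\<in>UNIV. \<Sum>l\<in>UNIV. e i \<odot> c l l i)"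
    by (simp only: cmul_minus_right cmul_sum_right sum_negf)
  also have "(\<Sum>i\<in>UNIV. \<Sum>l\<in>UNIV. e i \<odot> c l l i) = (\<Sum>l\<in>UNIV. \<Sum>i\<in>UNIV. e l \<odot> c l i i)"
    by (intro sum.cong refl) (metis c1 c2)
  finally show ?thesis using L by simp
qed

lemma alg_R3:
  fixes c :: "'n::{finite,linorder} \<Rightarrow> _"
  assumes c1: "\<And>l i j. c l i j = c i l j" and c2: "\<And>l i j. c l i j = c l j i"
  shows "(\<Sum>l\<in>UNIV. (\<Sum>i\<in>UNIV. (\<Sum>j\<in>UNIV. c l i j \<odot> e j) \<odot> e i) \<odot> e l)
       = (\<Sum>l\<in>UNIV. e l \<odot> (\<Sum>j\<in>UNIV. (\<Sum>i\<in>UNIV. e i \<odot> c l j i) \<odot> e j))"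
proof -
  have l1: "(\<Sum>i\<in>UNIV. (\<Sum>j\<in>UNIV. c l i j \<odot> e j) \<odot> e i) = - (\<Sum>i\<in>UNIV. c l i i)" for l
    using sym_RR[of "c l", OF c2] by (simp only: cmul_sum_left)
  have L: "(\<Sum>l\<in>UNIV. (\<Sum>i\<in>UNIV. (\<Sum>j\<in>UNIV. c l i j \<odot> e j) \<odot> e i) \<odot> e l)
      = - (\<Sum>l\<in>UNIV. \<Sum>i\<in>UNIV. c l i i \<odot> e l)"
    unfolding l1 by (simp only: cmul_minus_left cmul_sum_left sum_negf)
  have "(\<Sum>l\<in>UNIV. e l \<odot> (\<Sum>j\<in>UNIV. (\<Sum>i\<in>UNIV. e i \<odot> c l j i) \<odot> e j))
      = (\<Sum>l\<in>UNIV. \<Sum>j\<in>UNIV. \<Sum>i\<in>UNIV. (e l \<odot> (e i \<odot> c l j i)) \<odot> e j)"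
    by (simp only: cmul_sum_left cmul_sum_right F3)
  also have "\<dots> = (\<Sum>j\<in>UNIV. \<Sum>l\<in>UNIV. \<Sum>i\<in>UNIV. (e l \<odot> (e i \<odot> c l j i)) \<odot> e j)"
    by (rule sum.swap)
  also have "\<dots> = (\<Sum>j\<in>UNIV. (\<Sum>l\<in>UNIV. \<Sum>i\<in>UNIV. e l \<odot> (e i \<odot> c l j i)) \<odot> e j)"
    by (simp only: cmul_sum_left)
  also have "\<dots> = (\<Sum>j\<in>UNIV. (- (\<Sum>l\<in>UNIV. c l j l)) \<odot> e j)"
  proof -
    have "c l j i = c i j l" for l j i by (metis c1 c2)
    then show ?thesis using sym_LL[of "\<lambda>l i. c l j i" for j] by simp
  qed
  also have "\<dots> = - (\<Sum>j\<in>UNIV. \<Sum>l\<in>UNIV. c l j l \<odot> e j)"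
    by (simp only: cmul_minus_left cmul_sum_left sum_negf)
  also have "(\<Sum>j\<in>UNIV. \<Sum>l\<in>UNIV. c l j l \<odot> e j) = (\<Sum>l\<in>UNIV. \<Sum>i\<in>UNIV. c l i i \<odot> e l)"
    by (intro sum.cong refl) (metis c1 c2)
  finally show ?thesis using L by simp
qed

definition HD :: "'n::{finite,linorder} \<Rightarrow> (real ^ 'n::{finite,linorder} \<Rightarrow> 'n::{finite,linorder} clif) \<Rightarrow> real ^ 'n::{finite,linorder} \<Rightarrow> 'n::{finite,linorder} clif \<Rightarrow> bool" where
  "HD j f x D \<longleftrightarrow> ((\<lambda>t. f (x + t *\<^sub>R axis j 1)) has_vector_derivative D) (at 0)"

lemma HD_pd: "HD j f x D \<Longrightarrow> pd j f x = D"
  unfolding HD_def pd_def by (rule vector_derivative_at)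

lemma HD_unique: "HD j f x D \<Longrightarrow> HD j f x D' \<Longrightarrow> D = D'"
  using HD_pd by metis

lemma diff_HD: "(\<lambda>t. f (x + t *\<^sub>R axis j 1)) differentiable (at 0) \<Longrightarrow> HD j f x (pd j f x)"
  unfolding HD_def pd_def by (simp add: vector_derivative_works[symmetric])

lemma HD_add: "HD j f x D \<Longrightarrow> HD j g x E \<Longrightarrow> HD j (\<lambda>y. f y + g y) x (D + E)"
  unfolding HD_def by (rule has_vector_derivative_add)

lemma HD_sum: "(\<And>i. i \<in> I \<Longrightarrow> HD j (f i) x (D i)) \<Longrightarrow> HD j (\<lambda>y. \<Sum>i\<in>I. f i y) x (\<Sum>i\<in>I. D i)"
  unfolding HD_def by (rule has_vector_derivative_sum)

lemma HD_lmul: "HD j f x D \<Longrightarrow> HD j (\<lambda>y. c \<odot> f y) x (c \<odot> D)"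
  unfolding HD_def
  by (rule bounded_linear.has_vector_derivative[OF bounded_bilinear.bounded_linear_right[OF bounded_bilinear_cmul]])

lemma HD_rmul: "HD j f x D \<Longrightarrow> HD j (\<lambda>y. f y \<odot> c) x (D \<odot> c)"
  unfolding HD_def
  by (rule bounded_linear.has_vector_derivative[OF bounded_bilinear.bounded_linear_left[OF bounded_bilinear_cmul]])

lemma cvec_line: "cvec (x + t *\<^sub>R axis j 1) = cvec x + t *\<^sub>R e j"
proof -
  have "cvec (x + t *\<^sub>R axis j 1) = (\<Sum>k\<in>UNIV. (x $ k) *\<^sub>R e k + (if k = j then t else 0) *\<^sub>R e k)"
    unfolding cvec_def by (intro sum.cong refl) (simp add: axis_def scaleR_add_left)
  also have "\<dots> = cvec x + t *\<^sub>R e j"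
    by (simp add: sum.distrib cvec_def if_distrib[of "\<lambda>r. r *\<^sub>R _"] cong: if_cong)
  finally show ?thesis .
qed

lemma HD_cvec: "((\<lambda>t. cvec (x + t *\<^sub>R axis j 1)) has_vector_derivative e j) (at 0)"
  unfolding cvec_line by (auto intro!: derivative_eq_intros)

lemma HD_mulX: "HD j f x D \<Longrightarrow> HD j (\<lambda>y. f y \<odot> cvec y) x (D \<odot> cvec x + f x \<odot> e j)"
  unfolding HD_def
  using bounded_bilinear.has_vector_derivative[OF bounded_bilinear_cmul, of "\<lambda>t. f (x + t *\<^sub>R axis j 1)" D 0 UNIV
      "\<lambda>t. cvec (x + t *\<^sub>R axis j 1)" "e j", OF _ HD_cvec]
  by (simp add: add.commute)

lemma HD_Xmul: "HD j f x D \<Longrightarrow> HD j (\<lambda>y. cvec y \<odot> f y) x (e j \<odot> f x + cvec x \<odot> D)"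
  unfolding HD_def
  using bounded_bilinear.has_vector_derivative[OF bounded_bilinear_cmul,
      of "\<lambda>t. cvec (x + t *\<^sub>R axis j 1)" "e j" 0 UNIV "\<lambda>t. f (x + t *\<^sub>R axis j 1)" D, OF HD_cvec]
  by (simp add: add.commute)

lemma HD_const: "HD j (\<lambda>y. c) x 0"
  unfolding HD_def by simp

lemma HD_local:
  assumes "HD j f x D" "open \<Omega>" "x \<in> \<Omega>" "\<And>y. y \<in> \<Omega> \<Longrightarrow> f y = g y"
  shows "HD j g x D"
proof -
  let ?S = "(\<lambda>t. x + t *\<^sub>R axis j (1::real)) -` \<Omega>"
  have "open ?S" by (rule continuous_open_vimage) (use assms(2) in \<open>auto intro!: continuous_intros\<close>)
  moreover have "0 \<in> ?S" using assms(3) by simp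
  ultimately show ?thesis unfolding HD_def
  proof (rule has_vector_derivative_transform_within_open[rotated])
    show "((\<lambda>t. f (x + t *\<^sub>R axis j 1)) has_vector_derivative D) (at 0)" using assms(1) unfolding HD_def .
    show "f (x + t *\<^sub>R axis j 1) = g (x + t *\<^sub>R axis j 1)" if "t \<in> ?S" for t using assms(4) that by auto
  qed
qed

lemma HD_zero_local:
  assumes "open \<Omega>" "x \<in> \<Omega>" "\<And>y. y \<in> \<Omega> \<Longrightarrow> f y = 0"
  shows "HD j f x 0"
proof (rule HD_local[OF HD_const[where c=0] assms(1,2)])
  show "0 = f y" if "y \<in> \<Omega>" for y using assms(3) that by simp
qed

lemma HD_comp: "HD j f x D \<Longrightarrow> ((\<lambda>t. f (x + t *\<^sub>R axis j 1) $ A) has_real_derivative D $ A) (at 0)"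
  unfolding HD_def has_real_derivative_iff_has_vector_derivative
  by (rule bounded_linear.has_vector_derivative[OF bounded_linear_vec_nth])

lemma HD_kvector:
  assumes "HD j f x D" "open \<Omega>" "x \<in> \<Omega>" "\<And>y. y \<in> \<Omega> \<Longrightarrow> kvector k (f y)"
  shows "kvector k D"
proof -
  define P :: "'a clif \<Rightarrow> 'a clif" where "P u = (\<chi> A. if card A \<noteq> k then u $ A else 0)" for u
  have "linear P" unfolding linear_iff P_def by (simp add: vec_eq_iff)
  then have bP: "bounded_linear P" using linear_conv_bounded_linear by blast
  have "HD j (\<lambda>y. P (f y)) x (P D)"
    using assms(1) unfolding HD_def by (rule bounded_linear.has_vector_derivative[OF bP])
  moreover have "HD j (\<lambda>y. P (f y)) x 0"
    by (rule HD_zero_local[OF assms(2,3)]) (use assms(4) in \<open>auto simp: P_def kvector_def vec_eq_iff\<close>)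
  ultimately have "P D = 0" by (rule HD_unique)
  then show ?thesis unfolding kvector_def P_def vec_eq_iff by (auto, metis)
qed

lemma line_shift:
  fixes g :: "real ^ 'n \<Rightarrow> real"
  assumes "((\<lambda>t. g ((y + s0 *\<^sub>R u) + t *\<^sub>R u)) has_real_derivative d) (at 0)"
  shows "((\<lambda>s. g (y + s *\<^sub>R u)) has_real_derivative d) (at s0)"
proof -
  have "(\<lambda>t. g (y + (t + s0) *\<^sub>R u)) = (\<lambda>t. g ((y + s0 *\<^sub>R u) + t *\<^sub>R u))"
    by (simp add: algebra_simps)
  then have "((\<lambda>t. g (y + (t + s0) *\<^sub>R u)) has_real_derivative d) (at 0)" using assms by simp
  then show ?thesis using DERIV_shift[of "\<lambda>s. g (y + s *\<^sub>R u)" d 0 s0] by simp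
qed

lemma mixed_mvt:
  fixes g gu gvu :: "real ^ 'n \<Rightarrow> real"
  assumes h: "0 < h"
    and inO: "\<And>s t. 0 \<le> s \<Longrightarrow> s \<le> h \<Longrightarrow> 0 \<le> t \<Longrightarrow> t \<le> h \<Longrightarrow> x + s *\<^sub>R u + t *\<^sub>R v \<in> \<Omega>"
    and du: "\<And>y. y \<in> \<Omega> \<Longrightarrow> ((\<lambda>t. g (y + t *\<^sub>R u)) has_real_derivative gu y) (at 0)"
    and duv: "\<And>y. y \<in> \<Omega> \<Longrightarrow> ((\<lambda>t. gu (y + t *\<^sub>R v)) has_real_derivative gvu y) (at 0)"
  shows "\<exists>s t. 0 < s \<and> s < h \<and> 0 < t \<and> t < h \<and>
    g (x + h *\<^sub>R u + h *\<^sub>R v) - g (x + h *\<^sub>R u) - g (x + h *\<^sub>R v) + g x = h * (h * gvu (x + s *\<^sub>R u + t *\<^sub>R v))"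
proof -
  define \<phi> where "\<phi> s = g (x + s *\<^sub>R u + h *\<^sub>R v) - g (x + s *\<^sub>R u)" for s
  have d\<phi>: "(\<phi> has_real_derivative (gu (x + s *\<^sub>R u + h *\<^sub>R v) - gu (x + s *\<^sub>R u))) (at s)"
    if "0 \<le> s" "s \<le> h" for s
  proof -
    have p1: "x + s *\<^sub>R u + h *\<^sub>R v \<in> \<Omega>" using inO[of s h] that h by simp
    have p2: "x + s *\<^sub>R u \<in> \<Omega>" using inO[of s 0] that h by simp
    have e1: "(x + h *\<^sub>R v) + s *\<^sub>R u = x + s *\<^sub>R u + h *\<^sub>R v" by (simp add: algebra_simps)
    have "((\<lambda>s. g ((x + h *\<^sub>R v) + s *\<^sub>R u)) has_real_derivative gu (x + s *\<^sub>R u + h *\<^sub>R v)) (at s)"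
      by (rule line_shift) (use du[OF p1] in \<open>simp add: e1\<close>)
    moreover have "(\<lambda>s. g ((x + h *\<^sub>R v) + s *\<^sub>R u)) = (\<lambda>s. g (x + s *\<^sub>R u + h *\<^sub>R v))"
      by (simp add: algebra_simps)
    ultimately have 1: "((\<lambda>s. g (x + s *\<^sub>R u + h *\<^sub>R v)) has_real_derivative gu (x + s *\<^sub>R u + h *\<^sub>R v)) (at s)"
      by simp
    have 2: "((\<lambda>s. g (x + s *\<^sub>R u)) has_real_derivative gu (x + s *\<^sub>R u)) (at s)"
      by (rule line_shift) (use du[OF p2] in simp)
    show ?thesis unfolding \<phi>_def by (rule DERIV_diff[OF 1 2])
  qed
  obtain s1 where s1: "0 < s1" "s1 < h"
    and eq1: "\<phi> h - \<phi> 0 = (h - 0) * (gu (x + s1 *\<^sub>R u + h *\<^sub>R v) - gu (x + s1 *\<^sub>R u))"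
    using MVT2[OF h d\<phi>] by blast
  define \<psi> where "\<psi> t = gu (x + s1 *\<^sub>R u + t *\<^sub>R v)" for t
  have d\<psi>: "(\<psi> has_real_derivative gvu (x + s1 *\<^sub>R u + t *\<^sub>R v)) (at t)" if "0 \<le> t" "t \<le> h" for t
  proof -
    have p: "x + s1 *\<^sub>R u + t *\<^sub>R v \<in> \<Omega>" using inO[of s1 t] that s1 by simp
    show ?thesis unfolding \<psi>_def by (rule line_shift) (use duv[OF p] in simp)
  qed
  obtain t1 where t1: "0 < t1" "t1 < h"
    and eq2: "\<psi> h - \<psi> 0 = (h - 0) * gvu (x + s1 *\<^sub>R u + t1 *\<^sub>R v)"
    using MVT2[OF h d\<psi>] by blast
  have "g (x + h *\<^sub>R u + h *\<^sub>R v) - g (x + h *\<^sub>R u) - g (x + h *\<^sub>R v) + g x = \<phi> h - \<phi> 0"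
    unfolding \<phi>_def by simp
  also have "\<dots> = h * (\<psi> h - \<psi> 0)" unfolding eq1 \<psi>_def by simp
  also have "\<dots> = h * (h * gvu (x + s1 *\<^sub>R u + t1 *\<^sub>R v))" unfolding eq2 by simp
  finally show ?thesis using s1 t1 by blast
qed


lemma norm_two_le:
  fixes u v :: "'a::real_normed_vector"
  assumes "norm u \<le> 1" "norm v \<le> 1" "0 \<le> s" "0 \<le> t"
  shows "norm (s *\<^sub>R u + t *\<^sub>R v) \<le> s + t"
proof -
  have "norm (s *\<^sub>R u + t *\<^sub>R v) \<le> norm (s *\<^sub>R u) + norm (t *\<^sub>R v)" by (rule norm_triangle_ineq)
  also have "norm (s *\<^sub>R u) \<le> s" using assms(1,3) by (simp add: mult_left_le)
  also have "norm (t *\<^sub>R v) \<le> t" using assms(2,4) by (simp add: mult_left_le)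
  finally show ?thesis by simp
qed

lemma absurd3: fixes w a b :: real shows "\<bar>w - a\<bar> < \<bar>a - b\<bar> / 2 \<Longrightarrow> \<bar>w - b\<bar> < \<bar>a - b\<bar> / 2 \<Longrightarrow> False"
  by (cases "a \<le> b"; cases "w \<le> a"; cases "w \<le> b") auto

lemma schwarz_real:
  fixes g gu gv gvu guv :: "real ^ 'n \<Rightarrow> real"
  assumes O: "open \<Omega>" "x \<in> \<Omega>" and nu: "norm u \<le> 1" and nv: "norm v \<le> 1"
    and du: "\<And>y. y \<in> \<Omega> \<Longrightarrow> ((\<lambda>t. g (y + t *\<^sub>R u)) has_real_derivative gu y) (at 0)"
    and dv: "\<And>y. y \<in> \<Omega> \<Longrightarrow> ((\<lambda>t. g (y + t *\<^sub>R v)) has_real_derivative gv y) (at 0)"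
    and duv: "\<And>y. y \<in> \<Omega> \<Longrightarrow> ((\<lambda>t. gu (y + t *\<^sub>R v)) has_real_derivative gvu y) (at 0)"
    and dvu: "\<And>y. y \<in> \<Omega> \<Longrightarrow> ((\<lambda>t. gv (y + t *\<^sub>R u)) has_real_derivative guv y) (at 0)"
    and c1: "continuous_on \<Omega> gvu" and c2: "continuous_on \<Omega> guv"
  shows "gvu x = guv x"
proof (rule ccontr)
  assume ne: "gvu x \<noteq> guv x"
  define \<epsilon> where "\<epsilon> = \<bar>gvu x - guv x\<bar> / 2"
  have ep: "\<epsilon> > 0" using ne by (simp add: \<epsilon>_def)
  have "isCont gvu x" using c1 O continuous_on_eq_continuous_at by blast
  then obtain d1 where d1: "d1 > 0" "\<And>y. dist y x < d1 \<Longrightarrow> dist (gvu y) (gvu x) < \<epsilon>"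
    using ep unfolding continuous_at_eps_delta by blast
  have "isCont guv x" using c2 O continuous_on_eq_continuous_at by blast
  then obtain d2 where d2: "d2 > 0" "\<And>y. dist y x < d2 \<Longrightarrow> dist (guv y) (guv x) < \<epsilon>"
    using ep unfolding continuous_at_eps_delta by blast
  obtain r where r: "r > 0" "ball x r \<subseteq> \<Omega>" using O open_contains_ball by blast
  define h where "h = min r (min d1 d2) / 3"
  have h: "h > 0" using r d1 d2 by (simp add: h_def)
  have close: "dist (x + s *\<^sub>R a + t *\<^sub>R b) x < min r (min d1 d2)"
    if "0 \<le> s" "s \<le> h" "0 \<le> t" "t \<le> h" "norm a \<le> 1" "norm b \<le> 1" for s t a b
  proof -
    have "dist (x + s *\<^sub>R a + t *\<^sub>R b) x = norm (s *\<^sub>R a + t *\<^sub>R b)"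
      by (simp add: dist_norm algebra_simps)
    also have "\<dots> \<le> s + t" using norm_two_le[OF that(5,6) that(1,3)] .
    also have "\<dots> < min r (min d1 d2)" using that h unfolding h_def by linarith
    finally show ?thesis .
  qed
  have inO: "x + s *\<^sub>R a + t *\<^sub>R b \<in> \<Omega>"
    if "0 \<le> s" "s \<le> h" "0 \<le> t" "t \<le> h" "norm a \<le> 1" "norm b \<le> 1" for s t a b
    using close[OF that] r(2) by (auto simp: dist_commute)
  obtain s1 t1 where st1: "0 < s1" "s1 < h" "0 < t1" "t1 < h"
    and E1: "g (x + h *\<^sub>R u + h *\<^sub>R v) - g (x + h *\<^sub>R u) - g (x + h *\<^sub>R v) + g x = h * (h * gvu (x + s1 *\<^sub>R u + t1 *\<^sub>R v))"
    using mixed_mvt[OF h inO[OF _ _ _ _ nu nv] du duv] by blast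
  obtain s2 t2 where st2: "0 < s2" "s2 < h" "0 < t2" "t2 < h"
    and E2: "g (x + h *\<^sub>R v + h *\<^sub>R u) - g (x + h *\<^sub>R v) - g (x + h *\<^sub>R u) + g x = h * (h * guv (x + s2 *\<^sub>R v + t2 *\<^sub>R u))"
    using mixed_mvt[OF h inO[OF _ _ _ _ nv nu] dv dvu] by blast
  have e: "x + h *\<^sub>R v + h *\<^sub>R u = x + h *\<^sub>R u + h *\<^sub>R v" by (simp add: algebra_simps)
  have "h * (h * gvu (x + s1 *\<^sub>R u + t1 *\<^sub>R v)) = h * (h * guv (x + s2 *\<^sub>R v + t2 *\<^sub>R u))"
    using E1 E2 unfolding e by linarith
  then have eq: "gvu (x + s1 *\<^sub>R u + t1 *\<^sub>R v) = guv (x + s2 *\<^sub>R v + t2 *\<^sub>R u)" using h by simp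
  have "dist (gvu (x + s1 *\<^sub>R u + t1 *\<^sub>R v)) (gvu x) < \<epsilon>"
    using d1(2) close[of s1 t1 u v] st1 nu nv by simp
  moreover have "dist (guv (x + s2 *\<^sub>R v + t2 *\<^sub>R u)) (guv x) < \<epsilon>"
    using d2(2) close[of s2 t2 v u] st2 nu nv by simp
  ultimately show False using eq absurd3 unfolding \<epsilon>_def dist_real_def by metis
qed


lemma schwarz_HD:
  assumes O: "open \<Omega>" "x \<in> \<Omega>"
    and h1: "\<And>y. y \<in> \<Omega> \<Longrightarrow> HD i f y (fi y)" and h2: "\<And>y. y \<in> \<Omega> \<Longrightarrow> HD j f y (fj y)"
    and h3: "\<And>y. y \<in> \<Omega> \<Longrightarrow> HD j fi y (fji y)" and h4: "\<And>y. y \<in> \<Omega> \<Longrightarrow> HD i fj y (fij y)"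
    and c1: "continuous_on \<Omega> fji" and c2: "continuous_on \<Omega> fij"
  shows "fji x = fij x"
proof -
  have "fji x $ A = fij x $ A" for A
    by (rule schwarz_real[OF O, where u="axis i 1" and v="axis j 1" and g="\<lambda>y. f y $ A"
          and gu="\<lambda>y. fi y $ A" and gv="\<lambda>y. fj y $ A"])
      (auto intro!: HD_comp h1 h2 h3 h4 continuous_on_component c1 c2)
  then show ?thesis by (simp add: vec_eq_iff)
qed

theorem mainTheorem10:
  fixes F :: "real ^ 'n::{finite,linorder} \<Rightarrow> 'n::{finite,linorder} clif"
    and \<Omega> :: "(real ^ 'n::{finite,linorder}) set"
  assumes "even CARD('n::{finite,linorder})"
    and "open \<Omega>"
    and "Ck_on 3 \<Omega> F"
    and "\<forall>x\<in>\<Omega>. kvector (CARD('n::{finite,linorder}) div 2) (F x)"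
  shows "(inframonogenic \<Omega> F \<longleftrightarrow>
            left_monogenic_k 3 \<Omega> F \<and> left_monogenic_k 3 \<Omega> (\<lambda>x. F x \<odot> cvec x))
       \<and> (inframonogenic \<Omega> F \<longleftrightarrow>
            right_monogenic_k 3 \<Omega> F \<and> right_monogenic_k 3 \<Omega> (\<lambda>x. cvec x \<odot> F x))"
proof -
  note ev = assms(1) and O = assms(2)
  define k where "k = CARD('n) div 2"
  define a where "a j = pd j F" for j
  define b where "b i j = pd i (a j)" for i j
  have C3: "Ck_on (Suc (Suc (Suc 0))) \<Omega> F" using assms(3) by (simp only: numeral_3_eq_3)
  have hF: "HD j F y (a j y)" if "y \<in> \<Omega>" for j y
    unfolding a_def by (rule diff_HD) (use C3 that in simp)
  have ha: "HD i (a j) y (b i j y)" if "y \<in> \<Omega>" for i j y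
    unfolding b_def by (rule diff_HD) (use C3 that in \<open>simp add: a_def\<close>)
  have hb: "HD l (b i j) y (pd l (b i j) y)" if "y \<in> \<Omega>" for l i j y
    by (rule diff_HD) (use C3 that in \<open>simp add: a_def b_def\<close>)
  have ca: "continuous_on \<Omega> (a j)" for j using C3 by (simp add: a_def)
  have cb: "continuous_on \<Omega> (b i j)" for i j using C3 by (simp add: a_def b_def)
  have cc: "continuous_on \<Omega> (pd l (b i j))" for l i j using C3 by (simp add: a_def b_def)
  have bsym: "b i j y = b j i y" if "y \<in> \<Omega>" for i j y
    by (rule sym, rule schwarz_HD[OF O that, where f=F and fi="a i" and fj="a j"]) (auto intro: hF ha cb)
  have ak: "kvector k (a j y)" if "y \<in> \<Omega>" for j y
    by (rule HD_kvector[OF hF[OF that] O that]) (use assms(4) in \<open>auto simp: k_def\<close>)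
  have bk: "kvector k (b i j y)" if "y \<in> \<Omega>" for i j y
    by (rule HD_kvector[OF ha[OF that] O that]) (use ak in auto)
  have p3: "(f ^^ 3) g = f (f (f g))" for f :: "'z \<Rightarrow> 'z" and g
    by (simp add: numeral_3_eq_3)
  have dlF: "dirac_l F = (\<lambda>y. \<Sum>i\<in>UNIV. e i \<odot> a i y)" by (simp add: dirac_l_def a_def fun_eq_iff)
  have hdlF: "HD j (dirac_l F) y (\<Sum>i\<in>UNIV. e i \<odot> b j i y)" if "y \<in> \<Omega>" for j y
    unfolding dlF by (intro HD_sum HD_lmul ha that)
  have dl2F: "dirac_l (dirac_l F) y = (\<Sum>j\<in>UNIV. e j \<odot> (\<Sum>i\<in>UNIV. e i \<odot> b j i y))" if "y \<in> \<Omega>" for y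
    unfolding dirac_l_def[of "dirac_l F"] using HD_pd[OF hdlF[OF that]] by simp
  have drdlF: "dirac_r (dirac_l F) y = (\<Sum>j\<in>UNIV. (\<Sum>i\<in>UNIV. e i \<odot> b j i y) \<odot> e j)" if "y \<in> \<Omega>" for y
    unfolding dirac_r_def[of "dirac_l F"] using HD_pd[OF hdlF[OF that]] by simp
  have drF: "dirac_r F = (\<lambda>y. \<Sum>j\<in>UNIV. a j y \<odot> e j)" by (simp add: dirac_r_def a_def fun_eq_iff)
  have hdrF: "HD i (dirac_r F) y (\<Sum>j\<in>UNIV. b i j y \<odot> e j)" if "y \<in> \<Omega>" for i y
    unfolding drF by (intro HD_sum HD_rmul ha that)
  have dr2F: "dirac_r (dirac_r F) y = (\<Sum>i\<in>UNIV. (\<Sum>j\<in>UNIV. b i j y \<odot> e j) \<odot> e i)" if "y \<in> \<Omega>" for y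
    unfolding dirac_r_def[of "dirac_r F"] using HD_pd[OF hdrF[OF that]] by simp
  define G where "G = (\<lambda>x. F x \<odot> cvec x)"
  have hG: "HD j G y (a j y \<odot> cvec y + F y \<odot> e j)" if "y \<in> \<Omega>" for j y
    unfolding G_def by (rule HD_mulX[OF hF[OF that]])
  have dlG: "dirac_l G y = (\<Sum>j\<in>UNIV. e j \<odot> (a j y \<odot> cvec y + F y \<odot> e j))" if "y \<in> \<Omega>" for y
    unfolding dirac_l_def[of G] using HD_pd[OF hG[OF that]] by simp
  have hdlG: "HD i (dirac_l G) y (\<Sum>j\<in>UNIV. e j \<odot> ((b i j y \<odot> cvec y + a j y \<odot> e i) + a i y \<odot> e j))"
    if "y \<in> \<Omega>" for i y
  proof (rule HD_local[OF _ O that])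
    show "HD i (\<lambda>y. \<Sum>j\<in>UNIV. e j \<odot> (a j y \<odot> cvec y + F y \<odot> e j)) y
        (\<Sum>j\<in>UNIV. e j \<odot> ((b i j y \<odot> cvec y + a j y \<odot> e i) + a i y \<odot> e j))"
      by (intro HD_sum HD_lmul HD_add HD_mulX HD_rmul ha hF that)
    show "(\<Sum>j\<in>UNIV. e j \<odot> (a j z \<odot> cvec z + F z \<odot> e j)) = dirac_l G z" if "z \<in> \<Omega>" for z
      using dlG[OF that] by simp
  qed
  have dl2G: "dirac_l (dirac_l G) y = (\<Sum>i\<in>UNIV. e i \<odot> (\<Sum>j\<in>UNIV. e j \<odot> ((b i j y \<odot> cvec y + a j y \<odot> e i) + a i y \<odot> e j)))"
    if "y \<in> \<Omega>" for y
    unfolding dirac_l_def[of "dirac_l G"] using HD_pd[OF hdlG[OF that]] by simp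
  define H where "H = (\<lambda>x. cvec x \<odot> F x)"
  have hH: "HD j H y (e j \<odot> F y + cvec y \<odot> a j y)" if "y \<in> \<Omega>" for j y
    unfolding H_def by (rule HD_Xmul[OF hF[OF that]])
  have drH: "dirac_r H y = (\<Sum>j\<in>UNIV. (e j \<odot> F y + cvec y \<odot> a j y) \<odot> e j)" if "y \<in> \<Omega>" for y
    unfolding dirac_r_def[of H] using HD_pd[OF hH[OF that]] by simp
  have hdrH: "HD i (dirac_r H) y (\<Sum>j\<in>UNIV. (e j \<odot> a i y + (e i \<odot> a j y + cvec y \<odot> b i j y)) \<odot> e j)"
    if "y \<in> \<Omega>" for i y
  proof (rule HD_local[OF _ O that])
    show "HD i (\<lambda>y. \<Sum>j\<in>UNIV. (e j \<odot> F y + cvec y \<odot> a j y) \<odot> e j) y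
        (\<Sum>j\<in>UNIV. (e j \<odot> a i y + (e i \<odot> a j y + cvec y \<odot> b i j y)) \<odot> e j)"
      by (intro HD_sum HD_rmul HD_add HD_lmul HD_Xmul ha hF that)
    show "(\<Sum>j\<in>UNIV. (e j \<odot> F z + cvec z \<odot> a j z) \<odot> e j) = dirac_r H z" if "z \<in> \<Omega>" for z
      using drH[OF that] by simp
  qed
  have dr2H: "dirac_r (dirac_r H) y = (\<Sum>i\<in>UNIV. (\<Sum>j\<in>UNIV. (e j \<odot> a i y + (e i \<odot> a j y + cvec y \<odot> b i j y)) \<odot> e j) \<odot> e i)"
    if "y \<in> \<Omega>" for y
    unfolding dirac_r_def[of "dirac_r H"] using HD_pd[OF hdrH[OF that]] by simp
  have key: "(dirac_l ^^ 3) G x = (dirac_l ^^ 3) F x \<odot> cvec x + (-2) *\<^sub>R dirac_r (dirac_l F) x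
      \<and> (dirac_r ^^ 3) H x = cvec x \<odot> (dirac_r ^^ 3) F x + (-2) *\<^sub>R dirac_r (dirac_l F) x
      \<and> (inframonogenic \<Omega> F \<longrightarrow> (dirac_l ^^ 3) F x = 0 \<and> (dirac_r ^^ 3) F x = 0)" if x: "x \<in> \<Omega>" for x
  proof -
    define c where "c l i j = pd l (b i j) x" for l i j
    have hc: "HD l (b i j) x (c l i j)" for l i j unfolding c_def by (rule hb[OF x])
    have c2: "c l i j = c l j i" for l i j
    proof -
      have "HD l (b j i) x (c l i j)" by (rule HD_local[OF hc O x]) (use bsym in auto)
      then show ?thesis using hc[of l j i] by (rule HD_unique)
    qed
    have c1: "c l i j = c i l j" for l i j
      unfolding c_def
      by (rule schwarz_HD[OF O x, where f="a j" and fi="b i j" and fj="b l j" and fji="pd l (b i j)" and fij="pd i (b l j)"])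
        (auto intro: ha hb cc)
    have bkx: "kvector (CARD('n) div 2) (b i j x)" for i j using bk[OF x] k_def by simp
    have bsx: "b i j x = b j i x" for i j using bsym[OF x] .
    have dl3F: "(dirac_l ^^ 3) F x = (\<Sum>l\<in>UNIV. e l \<odot> (\<Sum>j\<in>UNIV. e j \<odot> (\<Sum>i\<in>UNIV. e i \<odot> c l j i)))"
    proof -
      have pdl: "pd l (dirac_l (dirac_l F)) x = (\<Sum>j\<in>UNIV. e j \<odot> (\<Sum>i\<in>UNIV. e i \<odot> c l j i))" for l
        by (rule HD_pd, rule HD_local[OF _ O x, of _ "\<lambda>y. \<Sum>j\<in>UNIV. e j \<odot> (\<Sum>i\<in>UNIV. e i \<odot> b j i y)"])
          (auto intro!: HD_sum HD_lmul hc simp: dl2F)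
      show ?thesis by (simp add: p3 dirac_l_def[of "dirac_l (dirac_l F)"] pdl)
    qed
    have dr3F: "(dirac_r ^^ 3) F x = (\<Sum>l\<in>UNIV. (\<Sum>i\<in>UNIV. (\<Sum>j\<in>UNIV. c l i j \<odot> e j) \<odot> e i) \<odot> e l)"
    proof -
      have pdl: "pd l (dirac_r (dirac_r F)) x = (\<Sum>i\<in>UNIV. (\<Sum>j\<in>UNIV. c l i j \<odot> e j) \<odot> e i)" for l
        by (rule HD_pd, rule HD_local[OF _ O x, of _ "\<lambda>y. \<Sum>i\<in>UNIV. (\<Sum>j\<in>UNIV. b i j y \<odot> e j) \<odot> e i"])
          (auto intro!: HD_sum HD_rmul hc simp: dr2F)
      show ?thesis by (simp add: p3 dirac_r_def[of "dirac_r (dirac_r F)"] pdl)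
    qed
    have dl3G: "(dirac_l ^^ 3) G x = (\<Sum>l\<in>UNIV. e l \<odot> (\<Sum>i\<in>UNIV. e i \<odot> (\<Sum>j\<in>UNIV. e j \<odot>
            (((c l i j \<odot> cvec x + b i j x \<odot> e l) + b l j x \<odot> e i) + b l i x \<odot> e j))))"
    proof -
      have pdl: "pd l (dirac_l (dirac_l G)) x = (\<Sum>i\<in>UNIV. e i \<odot> (\<Sum>j\<in>UNIV. e j \<odot>
            (((c l i j \<odot> cvec x + b i j x \<odot> e l) + b l j x \<odot> e i) + b l i x \<odot> e j)))" for l
        by (rule HD_pd, rule HD_local[OF _ O x, of _ "\<lambda>y. \<Sum>i\<in>UNIV. e i \<odot> (\<Sum>j\<in>UNIV. e j \<odot> ((b i j y \<odot> cvec y + a j y \<odot> e i) + a i y \<odot> e j))"])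
          (auto intro!: HD_sum HD_lmul HD_add HD_mulX HD_rmul hc ha x simp: dl2G)
      show ?thesis by (simp add: p3 dirac_l_def[of "dirac_l (dirac_l G)"] pdl)
    qed
    have dr3H: "(dirac_r ^^ 3) H x = (\<Sum>l\<in>UNIV. (\<Sum>i\<in>UNIV. (\<Sum>j\<in>UNIV. (e j \<odot> b l i x + (e i \<odot> b l j x + (e l \<odot> b i j x + cvec x \<odot> c l i j))) \<odot> e j) \<odot> e i) \<odot> e l)"
    proof -
      have pdl: "pd l (dirac_r (dirac_r H)) x = (\<Sum>i\<in>UNIV. (\<Sum>j\<in>UNIV. (e j \<odot> b l i x + (e i \<odot> b l j x + (e l \<odot> b i j x + cvec x \<odot> c l i j))) \<odot> e j) \<odot> e i)" for l
        by (rule HD_pd, rule HD_local[OF _ O x, of _ "\<lambda>y. \<Sum>i\<in>UNIV. (\<Sum>j\<in>UNIV. (e j \<odot> a i y + (e i \<odot> a j y + cvec y \<odot> b i j y)) \<odot> e j) \<odot> e i"])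
          (auto intro!: HD_sum HD_rmul HD_add HD_lmul HD_Xmul hc ha x simp: dr2H)
      show ?thesis by (simp add: p3 dirac_r_def[of "dirac_r (dirac_r H)"] pdl)
    qed
    have eqL: "(dirac_l ^^ 3) G x = (dirac_l ^^ 3) F x \<odot> cvec x + (-2) *\<^sub>R dirac_r (dirac_l F) x"
      unfolding dl3G dl3F drdlF[OF x] by (rule alg_left[where b="\<lambda>i j. b i j x" and c=c, OF bsx bkx ev])
    have eqR: "(dirac_r ^^ 3) H x = cvec x \<odot> (dirac_r ^^ 3) F x + (-2) *\<^sub>R dirac_r (dirac_l F) x"
      unfolding dr3H dr3F drdlF[OF x] by (rule alg_right[where b="\<lambda>i j. b i j x" and c=c, OF bsx bkx ev])
    have inf: "(dirac_l ^^ 3) F x = 0 \<and> (dirac_r ^^ 3) F x = 0" if I: "inframonogenic \<Omega> F"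
    proof -
      have z: "(\<Sum>j\<in>UNIV. (\<Sum>i\<in>UNIV. e i \<odot> c l j i) \<odot> e j) = 0" for l
      proof -
        have "HD l (dirac_r (dirac_l F)) x 0"
          by (rule HD_zero_local[OF O x]) (use I in \<open>simp add: inframonogenic_def\<close>)
        moreover have "HD l (dirac_r (dirac_l F)) x (\<Sum>j\<in>UNIV. (\<Sum>i\<in>UNIV. e i \<odot> c l j i) \<odot> e j)"
          by (rule HD_local[OF _ O x, of _ "\<lambda>y. \<Sum>j\<in>UNIV. (\<Sum>i\<in>UNIV. e i \<odot> b j i y) \<odot> e j"])
            (auto intro!: HD_sum HD_lmul HD_rmul hc simp: drdlF)
        ultimately show ?thesis by (rule HD_unique[symmetric])
      qed
      have "(dirac_l ^^ 3) F x = 0" unfolding dl3F alg_L3[of c, OF c1 c2] z by simp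
      moreover have "(dirac_r ^^ 3) F x = 0" unfolding dr3F alg_R3[of c, OF c1 c2] z by simp
      ultimately show ?thesis ..
    qed
    show ?thesis using eqL eqR inf by blast
  qed
  have L: "inframonogenic \<Omega> F \<longleftrightarrow> left_monogenic_k 3 \<Omega> F \<and> left_monogenic_k 3 \<Omega> G"
  proof
    assume I: "inframonogenic \<Omega> F"
    then have Q: "\<forall>x\<in>\<Omega>. dirac_r (dirac_l F) x = 0" by (simp add: inframonogenic_def)
    show "left_monogenic_k 3 \<Omega> F \<and> left_monogenic_k 3 \<Omega> G"
      unfolding left_monogenic_k_def using key I Q by simp
  next
    assume A: "left_monogenic_k 3 \<Omega> F \<and> left_monogenic_k 3 \<Omega> G"
    show "inframonogenic \<Omega> F" unfolding inframonogenic_def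
    proof
      fix x assume x: "x \<in> \<Omega>"
      have "(-2::real) *\<^sub>R dirac_r (dirac_l F) x = 0"
        using key[OF x] A x unfolding left_monogenic_k_def by simp
      then show "dirac_r (dirac_l F) x = 0" by simp
    qed
  qed
  have R: "inframonogenic \<Omega> F \<longleftrightarrow> right_monogenic_k 3 \<Omega> F \<and> right_monogenic_k 3 \<Omega> H"
  proof
    assume I: "inframonogenic \<Omega> F"
    then have Q: "\<forall>x\<in>\<Omega>. dirac_r (dirac_l F) x = 0" by (simp add: inframonogenic_def)
    show "right_monogenic_k 3 \<Omega> F \<and> right_monogenic_k 3 \<Omega> H"
      unfolding right_monogenic_k_def using key I Q by simp
  next
    assume A: "right_monogenic_k 3 \<Omega> F \<and> right_monogenic_k 3 \<Omega> H"
    show "inframonogenic \<Omega> F" unfolding inframonogenic_def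
    proof
      fix x assume x: "x \<in> \<Omega>"
      have "(-2::real) *\<^sub>R dirac_r (dirac_l F) x = 0"
        using key[OF x] A x unfolding right_monogenic_k_def by simp
      then show "dirac_r (dirac_l F) x = 0" by simp
    qed
  qed
  show ?thesis using L R unfolding G_def H_def by simp
qed

end
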